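(* Let $m\ge 2$ be an integer with smallest prime factor $p$, and let $k$ and $d$ be positive integers such that $d<\tfrac{p(m-1)}{m(m-k)}$ (equivalently $d\,m(m-k)<p(m-1)$). Let $S\subseteq\{0,1,\dots,m-1\}$ with $|S|=k$ and let $A=S+m\mathbb{Z}=\{s+mn: s\in S,\ n\in\mathbb{Z}\}$. Then \[h(A^d)\le k^d.\]
   Context: For a set $X\subseteq\mathbb{R}^d$, the Helly number $h(X)$ is the smallest $h$ such that the following holds: for every finite family $\mathcal{F}$ of convex sets in $\mathbb{R}^d$, if every $h$ or fewer sets of $\mathcal{F}$ have a point of $X$ in their intersection, then the intersection of all sets of $\mathcal{F}$ contains a point of $X$. If no such $h$ exists, $h(X)=\infty$. $A^d$ denotes the $d$-fold Cartesian product of $A$. *)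

theory Defs
  imports "HOL-Analysis.Analysis" "HOL-Library.Extended_Nat"
begin

definition helly_prop :: "'a::real_vector set \<Rightarrow> nat \<Rightarrow> bool" where
  "helly_prop X h \<longleftrightarrow>
     (\<forall>F. finite F \<and> (\<forall>C\<in>F. convex C) \<and>
          (\<forall>G. G \<subseteq> F \<and> card G \<le> h \<longrightarrow> \<Inter>G \<inter> X \<noteq> {})
          \<longrightarrow> \<Inter>F \<inter> X \<noteq> {})"

text \<open>Helly number: least such h, or infinity if none exists.\<close>
definition helly_number :: "'a::real_vector set \<Rightarrow> enat" where
  "helly_number X = Inf {enat h | h. helly_prop X h}"

text \<open>d-fold Cartesian power of a set of reals, d = CARD('n).\<close>
definition cart_power :: "real set \<Rightarrow> (real ^ 'n) set" where
  "cart_power A = {x. \<forall>i. x $ i \<in> A}"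

end

theory Submission
  imports Defs
begin

lemma doignon_half:
  fixes W :: "'a::real_inner set" and cls :: "'a \<Rightarrow> 'c"
    and u :: "'j \<Rightarrow> 'a" and b :: "'j \<Rightarrow> real"
  assumes finW: "finite W" and clsN: "card (cls ` W) \<le> N"
    and pair: "\<And>x y. x \<in> W \<Longrightarrow> y \<in> W \<Longrightarrow> x \<noteq> y \<Longrightarrow> cls x = cls y \<Longrightarrow>
                 \<exists>t. 0 < t \<and> t < 1 \<and> (1 - t) *\<^sub>R x + t *\<^sub>R y \<in> W"
    and finJ: "finite J"
    and cov: "\<forall>w\<in>W. \<exists>j\<in>J. b j < inner (u j) w"
  shows "\<exists>I\<subseteq>J. card I \<le> N \<and> (\<forall>w\<in>W. \<exists>j\<in>I. b j < inner (u j) w)"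
proof (rule ccontr)
  assume nex: "\<not> ?thesis"
  define P where "P I \<longleftrightarrow> I \<subseteq> J \<and> (\<forall>w\<in>W. \<exists>j\<in>I. b j < inner (u j) w)" for I
  have "P J" using cov by (simp add: P_def)
  hence "\<exists>I. P I \<and> (\<forall>I'. P I' \<longrightarrow> card I \<le> card I')" by (rule ex_has_least_nat)
  then obtain I where PI: "P I" and Imin: "\<And>I'. P I' \<Longrightarrow> card I \<le> card I'"
    by blast
  have IJ: "I \<subseteq> J" and covI: "\<forall>w\<in>W. \<exists>j\<in>I. b j < inner (u j) w" using PI by (auto simp: P_def)
  have finI: "finite I" using finite_subset[OF IJ finJ] .
  have cardI: "card I > N"
  proof (rule ccontr)
    assume "\<not> card I > N"
    hence "card I \<le> N" by simp
    hence "\<exists>I\<subseteq>J. card I \<le> N \<and> (\<forall>w\<in>W. \<exists>j\<in>I. b j < inner (u j) w)" using IJ covI by blast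
    thus False using nex by blast
  qed
  have wit: "\<exists>w\<in>W. \<forall>j\<in>I-{i}. inner (u j) w \<le> b j" if iI: "i \<in> I" for i
  proof (rule ccontr)
    assume "\<not> ?thesis"
    hence "P (I - {i})" using IJ by (force simp: P_def not_le)
    hence "card I \<le> card (I - {i})" by (rule Imin)
    moreover have "card (I - {i}) < card I" using finI iI by (rule card_Diff1_less)
    ultimately show False by simp
  qed
  define B where "B j = {inner (u j) w | w. w \<in> W \<and> b j < inner (u j) w}" for j
  define g0 where "g0 j = Min (B j)" for j
  have Bne: "B j \<noteq> {}" and finB: "finite (B j)" if jI: "j \<in> I" for j
  proof -
    obtain w where "w \<in> W" "\<forall>j'\<in>I-{j}. inner (u j') w \<le> b j'" using wit[OF jI] by blast
    moreover obtain j' where "j' \<in> I" "b j' < inner (u j') w" using covI \<open>w \<in> W\<close> by blast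
    ultimately have "j' = j" by force
    then show "B j \<noteq> {}" using \<open>w \<in> W\<close> \<open>b j' < inner (u j') w\<close> by (auto simp: B_def)
    show "finite (B j)" using finW unfolding B_def by simp
  qed
  have g0B: "g0 j \<in> B j" if "j \<in> I" for j using Bne[OF that] finB[OF that] by (simp add: g0_def)
  have bg0: "b j < g0 j" if "j \<in> I" for j using g0B[OF that] by (auto simp: B_def)
  define V where "V = (\<lambda>(j, w). inner (u j) w) ` (I \<times> W)"
  have finV: "finite V" using finI finW by (simp add: V_def)
  have g0V: "g0 j \<in> V" if "j \<in> I" for j using g0B[OF that] that by (auto simp: B_def V_def)
  define \<Gamma> where "\<Gamma> = {g \<in> I \<rightarrow>\<^sub>E V. (\<forall>j\<in>I. g0 j \<le> g j) \<and> (\<forall>w\<in>W. \<exists>j\<in>I. g j \<le> inner (u j) w)}"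
  have finG: "finite \<Gamma>" using finI finV by (simp add: \<Gamma>_def finite_PiE)
  have "restrict g0 I \<in> \<Gamma>"
  proof -
    have "\<exists>j\<in>I. g0 j \<le> inner (u j) w" if "w \<in> W" for w
    proof -
      obtain j where j: "j \<in> I" "b j < inner (u j) w" using covI \<open>w \<in> W\<close> by blast
      have "inner (u j) w \<in> B j" using j that by (auto simp: B_def)
      hence "g0 j \<le> inner (u j) w" using finB[OF j(1)] by (simp add: g0_def)
      thus ?thesis using j by blast
    qed
    thus ?thesis using g0V by (auto simp: \<Gamma>_def)
  qed
  hence Gne: "\<Gamma> \<noteq> {}" by blast
  define M where "M = Max ((\<lambda>g. sum g I) ` \<Gamma>)"
  have "M \<in> (\<lambda>g. sum g I) ` \<Gamma>" unfolding M_def using finG Gne by (intro Max_in) auto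
  then obtain g where gG: "g \<in> \<Gamma>" and gM: "sum g I = M" by auto
  have gmax: "sum g' I \<le> sum g I" if "g' \<in> \<Gamma>" for g'
    using Max_ge[of "(\<lambda>g. sum g I) ` \<Gamma>"] finG that gM by (auto simp: M_def)
  have gPi: "g \<in> I \<rightarrow>\<^sub>E V" and gg0: "\<forall>j\<in>I. g0 j \<le> g j"
    and gcov: "\<forall>w\<in>W. \<exists>j\<in>I. g j \<le> inner (u j) w" using gG by (auto simp: \<Gamma>_def)
  have tight: "\<exists>z\<in>W. inner (u i) z = g i \<and> (\<forall>j\<in>I-{i}. inner (u j) z < g j)" if iI: "i \<in> I" for i
  proof -
    define T where "T = {w \<in> W. \<forall>j\<in>I-{i}. inner (u j) w < g j}"
    obtain w0 where w0: "w0 \<in> W" "\<forall>j\<in>I-{i}. inner (u j) w0 \<le> b j" using wit[OF iI] by blast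
    have "w0 \<in> T" unfolding T_def using w0 bg0 gg0 by force
    hence Tne: "T \<noteq> {}" by blast
    have finT: "finite T" using finW by (simp add: T_def)
    define g' where "g' = Min ((\<lambda>w. inner (u i) w) ` T)"
    have "g' \<in> (\<lambda>w. inner (u i) w) ` T" unfolding g'_def using finT Tne by (intro Min_in) auto
    then obtain z where zT: "z \<in> T" and zg: "inner (u i) z = g'" by auto
    have g'le: "g' \<le> inner (u i) w" if "w \<in> T" for w
      using Min_le[of "(\<lambda>w. inner (u i) w) ` T"] finT that by (auto simp: g'_def)
    have geT: "g i \<le> inner (u i) w" if wT: "w \<in> T" for w
    proof -
      obtain j where "j \<in> I" "g j \<le> inner (u j) w" using gcov wT by (auto simp: T_def)
      thus ?thesis using wT by (cases "j = i") (force simp: T_def)+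
    qed
    have "g i \<le> g'" using geT zT zg by force
    moreover have "\<not> g i < g'"
    proof
      assume lt: "g i < g'"
      define g2 where "g2 = g(i := g')"
      have "g' \<in> V" using zT zg iI by (auto simp: V_def T_def)
      hence "g2 \<in> I \<rightarrow>\<^sub>E V" using gPi iI by (auto simp: g2_def PiE_def extensional_def)
      moreover have "\<forall>j\<in>I. g0 j \<le> g2 j" using gg0 lt by (auto simp: g2_def)
      moreover have "\<forall>w\<in>W. \<exists>j\<in>I. g2 j \<le> inner (u j) w"
      proof
        fix w assume wW: "w \<in> W"
        show "\<exists>j\<in>I. g2 j \<le> inner (u j) w"
        proof (cases "w \<in> T")
          case True thus ?thesis using g'le iI by (auto simp: g2_def)
        next
          case False
          then obtain j where "j \<in> I - {i}" "g j \<le> inner (u j) w" using wW by (force simp: T_def not_less)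
          thus ?thesis by (auto simp: g2_def)
        qed
      qed
      ultimately have "g2 \<in> \<Gamma>" by (simp add: \<Gamma>_def)
      hence "sum g2 I \<le> sum g I" by (rule gmax)
      moreover have "sum g2 I = sum g I + (g' - g i)"
      proof -
        have "sum g2 I = g2 i + sum g2 (I - {i})" using finI iI by (simp add: sum.remove)
        moreover have "sum g I = g i + sum g (I - {i})" using finI iI by (simp add: sum.remove)
        moreover have "sum g2 (I - {i}) = sum g (I - {i})" by (rule sum.cong) (auto simp: g2_def)
        ultimately show ?thesis by (simp add: g2_def)
      qed
      ultimately show False using lt by simp
    qed
    ultimately have "g' = g i" by simp
    thus ?thesis using zT zg by (auto simp: T_def)
  qed
  hence "\<forall>i\<in>I. \<exists>z. z \<in> W \<and> inner (u i) z = g i \<and> (\<forall>j\<in>I-{i}. inner (u j) z < g j)" by blast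
  then obtain z where zall: "\<forall>i\<in>I. z i \<in> W \<and> inner (u i) (z i) = g i \<and> (\<forall>j\<in>I-{i}. inner (u j) (z i) < g j)"
    by (auto dest!: bchoice)
  have zW: "\<And>i. i \<in> I \<Longrightarrow> z i \<in> W"
    and zeq: "\<And>i. i \<in> I \<Longrightarrow> inner (u i) (z i) = g i"
    and zlt: "\<And>i j. i \<in> I \<Longrightarrow> j \<in> I \<Longrightarrow> j \<noteq> i \<Longrightarrow> inner (u j) (z i) < g j"
    using zall by auto
  have "card ((cls \<circ> z) ` I) \<le> card (cls ` W)"
    using zW finW by (intro card_mono) auto
  hence "\<not> inj_on (cls \<circ> z) I" using cardI clsN card_image by fastforce
  then obtain i i' where ii: "i \<in> I" "i' \<in> I" "i \<noteq> i'" "cls (z i) = cls (z i')"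
    unfolding inj_on_def by auto
  have "z i \<noteq> z i'" using zeq[OF ii(1)] zlt[OF ii(2) ii(1)] ii(3) by auto
  then obtain t where t: "0 < t" "t < 1" and yW: "(1 - t) *\<^sub>R z i + t *\<^sub>R z i' \<in> W"
    using pair zW ii by blast
  define y where "y = (1 - t) *\<^sub>R z i + t *\<^sub>R z i'"
  obtain j where jI: "j \<in> I" and jy: "g j \<le> inner (u j) y" using gcov yW by (auto simp: y_def)
  have iy: "inner (u j) y = (1 - t) * inner (u j) (z i) + t * inner (u j) (z i')"
    by (simp add: y_def inner_add_right)
  have A: "inner (u j) (z i) \<le> g j" using zeq zlt jI ii by (cases "j = i") (auto intro: less_imp_le)
  have B: "inner (u j) (z i') \<le> g j" using zeq zlt jI ii by (cases "j = i'") (auto intro: less_imp_le)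
  have C: "inner (u j) (z i) < g j \<or> inner (u j) (z i') < g j" using zlt jI ii by metis
  have "(1 - t) * inner (u j) (z i) + t * inner (u j) (z i') < g j"
  proof -
    have m1: "(1 - t) * inner (u j) (z i) \<le> (1 - t) * g j" using A t by (intro mult_left_mono) auto
    have m2: "t * inner (u j) (z i') \<le> t * g j" using B t by (intro mult_left_mono) auto
    have "(1 - t) * inner (u j) (z i) < (1 - t) * g j \<or> t * inner (u j) (z i') < t * g j"
      using C t by (auto intro: mult_strict_left_mono)
    hence "(1 - t) * inner (u j) (z i) + t * inner (u j) (z i') < (1 - t) * g j + t * g j"
      using m1 m2 by linarith
    thus ?thesis by (simp add: algebra_simps)
  qed
  thus False using jy iy by simp
qed


lemma helly_from_pair:
  fixes X :: "'a::euclidean_space set" and cls :: "'a \<Rightarrow> 'c"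
  assumes disc: "\<And>B. bounded B \<Longrightarrow> finite (X \<inter> B)"
    and fincls: "finite (cls ` X)" and clsN: "card (cls ` X) \<le> N"
    and pair: "\<And>x y. x \<in> X \<Longrightarrow> y \<in> X \<Longrightarrow> x \<noteq> y \<Longrightarrow> cls x = cls y \<Longrightarrow>
                 \<exists>t. 0 < t \<and> t < 1 \<and> (1 - t) *\<^sub>R x + t *\<^sub>R y \<in> X"
  shows "helly_prop X N"
  unfolding helly_prop_def
proof (intro allI impI)
  fix F :: "'a set set"
  assume asm: "finite F \<and> (\<forall>C\<in>F. convex C) \<and> (\<forall>G. G \<subseteq> F \<and> card G \<le> N \<longrightarrow> \<Inter>G \<inter> X \<noteq> {})"
  hence finF: "finite F" and cvx: "\<And>C. C \<in> F \<Longrightarrow> convex C"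
    and hyp: "\<And>G. G \<subseteq> F \<Longrightarrow> card G \<le> N \<Longrightarrow> \<Inter>G \<inter> X \<noteq> {}" by auto
  show "\<Inter>F \<inter> X \<noteq> {}"
  proof
    assume empty: "\<Inter>F \<inter> X = {}"
    define GG where "GG = {G. G \<subseteq> F \<and> card G \<le> N}"
    define q where "q G = (SOME x. x \<in> \<Inter>G \<inter> X)" for G
    have q: "q G \<in> \<Inter>G \<inter> X" if "G \<in> GG" for G
    proof -
      have "\<exists>x. x \<in> \<Inter>G \<inter> X" using hyp[of G] that by (auto simp: GG_def)
      thus ?thesis unfolding q_def by (rule someI_ex)
    qed
    define Q where "Q = q ` GG"
    have "GG \<subseteq> Pow F" by (auto simp: GG_def)
    hence "finite GG" using finF by (meson finite_Pow_iff finite_subset)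
    hence finQ: "finite Q" unfolding Q_def by simp
    define W where "W = X \<inter> convex hull Q"
    have finW: "finite W" unfolding W_def
      by (rule disc) (rule finite_imp_bounded_convex_hull[OF finQ])
    have pairW: "\<exists>t. 0 < t \<and> t < 1 \<and> (1 - t) *\<^sub>R x + t *\<^sub>R y \<in> W"
      if xy: "x \<in> W" "y \<in> W" "x \<noteq> y" "cls x = cls y" for x y
    proof -
      obtain t where t: "0 < t" "t < 1" "(1 - t) *\<^sub>R x + t *\<^sub>R y \<in> X"
        using pair[of x y] xy by (auto simp: W_def)
      have "(1 - t) *\<^sub>R x + t *\<^sub>R y \<in> convex hull Q"
        using xy t by (intro convexD[OF convex_convex_hull]) (auto simp: W_def)
      thus ?thesis using t by (auto simp: W_def)
    qed
    have clsW: "card (cls ` W) \<le> N"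
    proof -
      have "card (cls ` W) \<le> card (cls ` X)" using fincls by (intro card_mono) (auto simp: W_def)
      thus ?thesis using clsN by simp
    qed
    have "\<forall>w\<in>W. \<exists>C. C \<in> F \<and> w \<notin> C"
    proof
      fix w assume "w \<in> W"
      hence "w \<in> X" by (simp add: W_def)
      hence "w \<notin> \<Inter>F" using empty by blast
      thus "\<exists>C. C \<in> F \<and> w \<notin> C" by blast
    qed
    hence "\<exists>Cf. \<forall>w\<in>W. Cf w \<in> F \<and> w \<notin> Cf w" by (rule bchoice)
    then obtain Cf where Cf: "\<forall>w\<in>W. Cf w \<in> F \<and> w \<notin> Cf w" by blast
    define Pc where "Pc C = convex hull (C \<inter> Q)" for C
    have PcC: "Pc C \<subseteq> C" if "C \<in> F" for C
      unfolding Pc_def using cvx[OF that] by (intro hull_minimal) auto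
    have "\<forall>w\<in>W. \<exists>ab. inner (fst ab) w < snd ab \<and> (\<forall>x\<in>Pc (Cf w). snd ab < inner (fst ab) x)"
    proof
      fix w assume wW: "w \<in> W"
      have "closed (Pc (Cf w))" unfolding Pc_def
        using finQ by (intro compact_imp_closed finite_imp_compact_convex_hull) auto
      moreover have "convex (Pc (Cf w))" unfolding Pc_def by (rule convex_convex_hull)
      moreover have "w \<notin> Pc (Cf w)" using PcC Cf wW by blast
      ultimately obtain a b where "inner a w < b" "\<forall>x\<in>Pc (Cf w). b < inner a x"
        using separating_hyperplane_closed_point[of "Pc (Cf w)" w] by auto
      thus "\<exists>ab. inner (fst ab) w < snd ab \<and> (\<forall>x\<in>Pc (Cf w). snd ab < inner (fst ab) x)"
        by (intro exI[of _ "(a, b)"]) auto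
    qed
    then have "\<exists>ab. \<forall>w\<in>W. inner (fst (ab w)) w < snd (ab w) \<and>
        (\<forall>x\<in>Pc (Cf w). snd (ab w) < inner (fst (ab w)) x)" by (rule bchoice)
    then obtain ab where ab: "\<forall>w\<in>W. inner (fst (ab w)) w < snd (ab w) \<and>
        (\<forall>x\<in>Pc (Cf w). snd (ab w) < inner (fst (ab w)) x)" by blast
    have covW: "\<forall>w\<in>W. \<exists>j\<in>W. - snd (ab j) < inner (- fst (ab j)) w"
    proof
      fix w assume "w \<in> W"
      hence "inner (fst (ab w)) w < snd (ab w)" using ab by blast
      hence "- snd (ab w) < inner (- fst (ab w)) w" by simp
      thus "\<exists>j\<in>W. - snd (ab j) < inner (- fst (ab j)) w" using \<open>w \<in> W\<close> by blast
    qed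
    have "\<exists>I\<subseteq>W. card I \<le> N \<and> (\<forall>w\<in>W. \<exists>j\<in>I. - snd (ab j) < inner (- fst (ab j)) w)"
      using doignon_half[OF finW clsW _ finW covW] pairW by blast
    then obtain I where IW: "I \<subseteq> W" and cardI: "card I \<le> N"
      and covI: "\<forall>w\<in>W. \<exists>j\<in>I. - snd (ab j) < inner (- fst (ab j)) w"
      by blast
    define G where "G = Cf ` I"
    have finI: "finite I" using finite_subset[OF IW finW] .
    have "G \<subseteq> F" unfolding G_def using Cf IW by auto
    moreover have "card G \<le> N" unfolding G_def using cardI card_image_le[OF finI, of Cf] by linarith
    ultimately have "G \<in> GG" unfolding GG_def by simp
    hence x: "q G \<in> \<Inter>G \<inter> X" by (rule q)
    have xQ: "q G \<in> Q" unfolding Q_def using \<open>G \<in> GG\<close> by blast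
    hence "q G \<in> W" using x hull_inc[of "q G" Q] by (auto simp: W_def)
    then obtain j where jI: "j \<in> I" and lt: "- snd (ab j) < inner (- fst (ab j)) (q G)" using covI by blast
    have "q G \<in> Cf j" using x jI by (auto simp: G_def)
    hence "q G \<in> Pc (Cf j)" unfolding Pc_def using xQ by (intro hull_inc) auto
    moreover have "j \<in> W" using jI IW by blast
    ultimately have "snd (ab j) < inner (fst (ab j)) (q G)" using ab by blast
    thus False using lt by simp
  qed
qed


lemma fiber_bound:
  fixes m p :: nat and c r \<alpha> :: int
  assumes m2: "m \<ge> 2" and pp: "prime p" and pm: "p dvd m"
    and pmin: "\<forall>q. prime q \<and> q dvd m \<longrightarrow> p \<le> q"
    and nd: "\<not> int m dvd c"
  shows "p * card {j \<in> {0..<int m}. (\<alpha> + j * c) mod int m = r} \<le> m"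
proof -
  define M where "M = int m"
  define g where "g = gcd c M"
  define q where "q = M div g"
  have Mpos: "M > 0" using m2 by (simp add: M_def)
  have gpos: "g > 0" using Mpos by (simp add: g_def)
  have gM: "g dvd M" by (simp add: g_def)
  have Mqg: "M = q * g" using gM by (simp add: q_def)
  have qpos: "q > 0" using Mqg Mpos gpos by (simp add: zero_less_mult_iff)
  have "q \<noteq> 1"
  proof
    assume "q = 1"
    hence "g = M" using Mqg by simp
    hence "M dvd c" unfolding g_def by (metis gcd_dvd1)
    thus False using nd by (simp add: M_def)
  qed
  hence q2: "q \<ge> 2" using qpos by simp
  have qdvdm: "nat q dvd m"
  proof -
    have "q dvd M" using Mqg by simp
    hence "nat q dvd nat M" using qpos Mpos by (simp add: nat_dvd_iff)
    thus ?thesis by (simp add: M_def)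
  qed
  have "nat q \<noteq> 1" using q2 by simp
  then obtain r' where r': "prime r'" "r' dvd nat q" using prime_factor_nat[of "nat q"] by blast
  have "p \<le> r'" using pmin r' qdvdm dvd_trans by blast
  moreover have "r' \<le> nat q" using r' q2 by (intro dvd_imp_le) auto
  ultimately have "p \<le> nat q" by linarith
  hence pq: "int p \<le> q" using qpos by linarith
  have cop: "coprime q (c div g)"
  proof -
    have "coprime (c div g) (M div g)" unfolding g_def by (rule div_gcd_coprime) (use Mpos in auto)
    thus ?thesis by (simp add: q_def coprime_commute)
  qed
  define Fb where "Fb = {j \<in> {0..<M}. (\<alpha> + j * c) mod M = r}"
  have cong: "q dvd j - j'" if "j \<in> Fb" "j' \<in> Fb" for j j'
  proof -
    have "(\<alpha> + j * c) mod M = (\<alpha> + j' * c) mod M" using that by (simp add: Fb_def)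
    hence "M dvd (\<alpha> + j * c) - (\<alpha> + j' * c)" by (simp add: mod_eq_dvd_iff)
    hence "M dvd (j - j') * c" by (simp add: algebra_simps)
    moreover have "c = (c div g) * g" by (simp add: g_def)
    ultimately have "q * g dvd ((j - j') * (c div g)) * g" using Mqg by (metis mult.assoc)
    hence "q dvd (j - j') * (c div g)" using gpos by simp
    thus ?thesis using cop by (simp add: coprime_dvd_mult_left_iff)
  qed
  have inj: "inj_on (\<lambda>j. j div q) Fb"
  proof (rule inj_onI)
    fix j j' assume jj: "j \<in> Fb" "j' \<in> Fb" "j div q = j' div q"
    have "j mod q = j' mod q" using cong[OF jj(1,2)] by (simp add: mod_eq_dvd_iff)
    thus "j = j'" using jj(3) by (metis div_mult_mod_eq)
  qed
  have img: "(\<lambda>j. j div q) ` Fb \<subseteq> {0..<g}"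
  proof
    fix y assume "y \<in> (\<lambda>j. j div q) ` Fb"
    then obtain j where j: "j \<in> Fb" "y = j div q" by blast
    have j0: "0 \<le> j" "j < q * g" using j Mqg by (auto simp: Fb_def)
    have "0 \<le> y" using j j0 qpos by (simp add: pos_imp_zdiv_nonneg_iff)
    moreover have "y < g"
    proof (rule ccontr)
      assume "\<not> y < g"
      hence "g \<le> j div q" using j by simp
      hence "q * g \<le> q * (j div q)" using qpos by simp
      also have "\<dots> \<le> j" using qpos by (metis mult_div_mod_eq le_add_same_cancel1 pos_mod_sign)
      finally show False using j0 by simp
    qed
    ultimately show "y \<in> {0..<g}" by simp
  qed
  have "card Fb = card ((\<lambda>j. j div q) ` Fb)" using inj by (simp add: card_image)
  also have "\<dots> \<le> card {0..<g}" using img by (intro card_mono) auto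
  also have "\<dots> = nat g" by simp
  finally have cF: "int (card Fb) \<le> g" using gpos by linarith
  have "int p * int (card Fb) \<le> q * g" using cF pq gpos by (intro mult_mono) auto
  hence "int (p * card Fb) \<le> int m" using Mqg by (simp add: M_def)
  thus ?thesis unfolding Fb_def M_def by linarith
qed

lemma bad_bound:
  fixes m p k :: nat and c \<alpha> :: int and S :: "int set"
  assumes m2: "m \<ge> 2" and pp: "prime p" and pm: "p dvd m"
    and pmin: "\<forall>q. prime q \<and> q dvd m \<longrightarrow> p \<le> q"
    and S: "S \<subseteq> {0..<int m}" and cS: "card S = k"
    and aS: "\<alpha> mod int m \<in> S"
  shows "p * card {j \<in> {1..int m - 1}. (\<alpha> + j * c) mod int m \<notin> S} \<le> (m - k) * m"
proof (cases "int m dvd c")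
  case True
  have E: "{j \<in> {1..int m - 1}. (\<alpha> + j * c) mod int m \<notin> S} = {}"
  proof -
    have "(\<alpha> + j * c) mod int m = \<alpha> mod int m" for j
      using True by (metis dvd_mult mod_mult_self4 dvd_mult_div_cancel mult.commute mod_add_cong mod_0 dvd_imp_mod_0 add.right_neutral)
    thus ?thesis using aS by auto
  qed
  show ?thesis unfolding E by simp
next
  case False
  define R where "R = {0..<int m} - S"
  define Fb where "Fb r = {j \<in> {0..<int m}. (\<alpha> + j * c) mod int m = r}" for r
  have finR: "finite R" by (simp add: R_def)
  have cR: "card R = m - k"
  proof -
    have "card R = card {0..<int m} - card S" unfolding R_def using S by (intro card_Diff_subset) (auto intro: finite_subset)
    thus ?thesis using cS by simp
  qed
  have sub: "{j \<in> {1..int m - 1}. (\<alpha> + j * c) mod int m \<notin> S} \<subseteq> (\<Union>r\<in>R. Fb r)"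
  proof
    fix j assume "j \<in> {j \<in> {1..int m - 1}. (\<alpha> + j * c) mod int m \<notin> S}"
    hence j: "1 \<le> j" "j \<le> int m - 1" "(\<alpha> + j * c) mod int m \<notin> S" by auto
    have "(\<alpha> + j * c) mod int m \<in> {0..<int m}" using m2 by simp
    hence "(\<alpha> + j * c) mod int m \<in> R" using j by (simp add: R_def)
    moreover have "j \<in> Fb ((\<alpha> + j * c) mod int m)" using j by (simp add: Fb_def)
    ultimately show "j \<in> (\<Union>r\<in>R. Fb r)" by blast
  qed
  have finFb: "finite (Fb r)" for r
  proof -
    have "Fb r \<subseteq> {0..<int m}" by (auto simp: Fb_def)
    thus ?thesis by (rule finite_subset) simp
  qed
  have "card {j \<in> {1..int m - 1}. (\<alpha> + j * c) mod int m \<notin> S} \<le> card (\<Union>r\<in>R. Fb r)"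
    using sub finR finFb by (intro card_mono) auto
  also have "\<dots> \<le> (\<Sum>r\<in>R. card (Fb r))" by (rule card_UN_le[OF finR])
  finally have "p * card {j \<in> {1..int m - 1}. (\<alpha> + j * c) mod int m \<notin> S} \<le> p * (\<Sum>r\<in>R. card (Fb r))"
    by simp
  also have "\<dots> = (\<Sum>r\<in>R. p * card (Fb r))" by (simp add: sum_distrib_left)
  also have "\<dots> \<le> (\<Sum>r\<in>R. m)"
    by (intro sum_mono) (unfold Fb_def, rule fiber_bound[OF m2 pp pm pmin False])
  also have "\<dots> = (m - k) * m" using cR by simp
  finally show ?thesis .
qed

lemma good_j:
  fixes m p k d :: nat and c \<alpha> :: "'n::finite \<Rightarrow> int" and S :: "int set"
  assumes m2: "m \<ge> 2" and pp: "prime p" and pm: "p dvd m"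
    and pmin: "\<forall>q. prime q \<and> q dvd m \<longrightarrow> p \<le> q"
    and S: "S \<subseteq> {0..<int m}" and cS: "card S = k"
    and aS: "\<And>i. \<alpha> i mod int m \<in> S"
    and cond: "CARD('n) * m * (m - k) < p * (m - 1)"
  shows "\<exists>j. 1 \<le> j \<and> j \<le> int m - 1 \<and> (\<forall>i. (\<alpha> i + j * c i) mod int m \<in> S)"
proof (rule ccontr)
  assume nex: "\<not> ?thesis"
  define Bad where "Bad i = {j \<in> {1..int m - 1}. (\<alpha> i + j * c i) mod int m \<notin> S}" for i
  have cover: "{1..int m - 1} \<subseteq> (\<Union>i. Bad i)" using nex by (auto simp: Bad_def)
  have "m - 1 = card {1..int m - 1}" by simp
  also have "\<dots> \<le> card (\<Union>i. Bad i)"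
  proof (rule card_mono)
    have "(\<Union>i. Bad i) \<subseteq> {1..int m - 1}" by (auto simp: Bad_def)
    thus "finite (\<Union>i. Bad i)" by (rule finite_subset) simp
  qed (rule cover)
  also have "\<dots> \<le> (\<Sum>i\<in>UNIV. card (Bad i))" by (rule card_UN_le) simp
  finally have "p * (m - 1) \<le> p * (\<Sum>i\<in>UNIV. card (Bad i))" by simp
  also have "\<dots> = (\<Sum>i\<in>UNIV. p * card (Bad i))" by (simp add: sum_distrib_left)
  also have "\<dots> \<le> (\<Sum>i\<in>(UNIV::'n set). (m - k) * m)"
    by (intro sum_mono) (unfold Bad_def, rule bad_bound[OF m2 pp pm pmin S cS aS])
  also have "\<dots> = CARD('n) * m * (m - k)" by simp
  finally show False using cond by simp
qed


lemma finite_vec_set: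
  fixes T :: "real set"
  assumes "finite T"
  shows "finite {x :: real ^ 'n. \<forall>i. x $ i \<in> T}"
proof -
  have "{x :: real ^ 'n. \<forall>i. x $ i \<in> T} \<subseteq> vec_lambda ` (UNIV \<rightarrow>\<^sub>E T)"
  proof
    fix x :: "real ^ 'n" assume "x \<in> {x. \<forall>i. x $ i \<in> T}"
    hence "(\<lambda>i. x $ i) \<in> UNIV \<rightarrow>\<^sub>E T" by auto
    moreover have "x = vec_lambda (\<lambda>i. x $ i)" by simp
    ultimately show "x \<in> vec_lambda ` (UNIV \<rightarrow>\<^sub>E T)" by blast
  qed
  moreover have "finite (vec_lambda ` (UNIV \<rightarrow>\<^sub>E T))" using assms by (simp add: finite_PiE)
  ultimately show ?thesis by (rule finite_subset)
qed

lemma finite_int_bounded: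
  fixes B :: "(real ^ 'n) set"
  assumes "bounded B"
  shows "finite ({x. \<forall>i. x $ i \<in> \<int>} \<inter> B)"
proof -
  obtain r where r: "\<forall>x\<in>B. norm x \<le> r" using assms bounded_iff by blast
  define T where "T = real_of_int ` {-\<lceil>r\<rceil>..\<lceil>r\<rceil>}"
  have "{x. \<forall>i. x $ i \<in> \<int>} \<inter> B \<subseteq> {x. \<forall>i. x $ i \<in> T}"
  proof
    fix x :: "real ^ 'n" assume x: "x \<in> {x. \<forall>i. x $ i \<in> \<int>} \<inter> B"
    show "x \<in> {x. \<forall>i. x $ i \<in> T}"
    proof (clarify)
      fix i
      obtain z where z: "x $ i = real_of_int z" using x by (auto elim: Ints_cases)
      have "\<bar>x $ i\<bar> \<le> r" using r x component_le_norm_cart[of x i] by force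
      hence "\<bar>real_of_int z\<bar> \<le> r" using z by simp
      hence "-\<lceil>r\<rceil> \<le> z \<and> z \<le> \<lceil>r\<rceil>" by (auto simp: abs_le_iff) linarith+
      thus "x $ i \<in> T" using z by (auto simp: T_def)
    qed
  qed
  moreover have "finite {x :: real ^ 'n. \<forall>i. x $ i \<in> T}" by (rule finite_vec_set) (simp add: T_def)
  ultimately show ?thesis by (rule finite_subset)
qed

theorem theorem3:
  fixes m p k :: nat and S :: "int set"
  assumes "m \<ge> 2"
    and "prime p" and "p dvd m"
    and "\<forall>q. prime q \<and> q dvd m \<longrightarrow> p \<le> q"
    and "k > 0"
    and "S \<subseteq> {0..<int m}" and "card S = k"
    and "CARD('n::finite) * m * (m - k) < p * (m - 1)"
  shows "helly_number (cart_power {real_of_int (s + int m * n) | s n. s \<in> S \<and> n \<in> (UNIV::int set)}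
           :: (real ^ 'n) set) \<le> enat (k ^ CARD('n))"
proof -
  note m2 = assms(1) and pp = assms(2) and pm = assms(3) and pmin = assms(4)
    and S = assms(6) and cS = assms(7) and cond = assms(8)
  define A where "A = {real_of_int (s + int m * n) | s n. s \<in> S \<and> n \<in> (UNIV::int set)}"
  define X where "X = (cart_power A :: (real ^ 'n) set)"
  define cls where "cls x = (\<lambda>i. \<lfloor>(x :: real ^ 'n) $ i\<rfloor> mod int m)" for x
  have Mpos: "int m > 0" using m2 by simp
  have memA: "y \<in> A \<longleftrightarrow> (\<exists>z. y = real_of_int z \<and> z mod int m \<in> S)" for y
  proof
    assume "y \<in> A"
    then obtain s n where sn: "s \<in> S" "y = real_of_int (s + int m * n)" by (auto simp: A_def)
    have "s mod int m = s" using sn(1) S by (auto intro: mod_pos_pos_trivial)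
    hence "(s + int m * n) mod int m \<in> S" using sn(1) by simp
    thus "\<exists>z. y = real_of_int z \<and> z mod int m \<in> S" using sn by blast
  next
    assume "\<exists>z. y = real_of_int z \<and> z mod int m \<in> S"
    then obtain z where z: "y = real_of_int z" "z mod int m \<in> S" by blast
    have "z mod int m + int m * (z div int m) = z" by (rule mod_mult_div_eq)
    hence e: "y = real_of_int (z mod int m + int m * (z div int m))" using z(1) by simp
    show "y \<in> A" unfolding A_def mem_Collect_eq using z(2) e by blast
  qed
  have memX: "x \<in> X \<longleftrightarrow> (\<forall>i. \<exists>z. x $ i = real_of_int z \<and> z mod int m \<in> S)" for x
    by (simp add: X_def cart_power_def memA)
  have XZ: "X \<subseteq> {x. \<forall>i. x $ i \<in> \<int>}"
  proof (clarify)
    fix x i assume "x \<in> X"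
    then obtain z where "x $ i = real_of_int z" using memX by blast
    thus "x $ i \<in> \<int>" by simp
  qed
  have disc: "finite (X \<inter> B)" if "bounded B" for B
  proof -
    have "X \<inter> B \<subseteq> {x. \<forall>i. x $ i \<in> \<int>} \<inter> B" using XZ by blast
    thus ?thesis by (rule finite_subset) (rule finite_int_bounded[OF that])
  qed
  have clsX: "cls ` X \<subseteq> UNIV \<rightarrow>\<^sub>E S"
  proof
    fix v assume "v \<in> cls ` X"
    then obtain x where x: "x \<in> X" "v = cls x" by blast
    have "v i \<in> S" for i
    proof -
      obtain z where "x $ i = real_of_int z" "z mod int m \<in> S" using x memX by blast
      thus ?thesis using x by (simp add: cls_def)
    qed
    thus "v \<in> UNIV \<rightarrow>\<^sub>E S" by auto
  qed
  have finS: "finite S" using S by (rule finite_subset) simp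
  have finPi: "finite (UNIV \<rightarrow>\<^sub>E S :: ('n \<Rightarrow> int) set)" using finS by (simp add: finite_PiE)
  have fincls: "finite (cls ` X)" using clsX finPi by (rule finite_subset)
  have "card (cls ` X) \<le> card (UNIV \<rightarrow>\<^sub>E S :: ('n \<Rightarrow> int) set)" using clsX finPi by (rule card_mono[rotated])
  also have "\<dots> = k ^ CARD('n)" using cS by (simp add: card_PiE)
  finally have clsN: "card (cls ` X) \<le> k ^ CARD('n)" .
  have pair: "\<exists>t. 0 < t \<and> t < 1 \<and> (1 - t) *\<^sub>R x + t *\<^sub>R y \<in> X"
    if xy: "x \<in> X" "y \<in> X" "x \<noteq> y" "cls x = cls y" for x y
  proof -
    define \<alpha> where "\<alpha> i = \<lfloor>x $ i\<rfloor>" for i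
    define \<beta> where "\<beta> i = \<lfloor>y $ i\<rfloor>" for i
    have xa: "x $ i = real_of_int (\<alpha> i)" and aS: "\<alpha> i mod int m \<in> S" for i
    proof -
      obtain z where "x $ i = real_of_int z" "z mod int m \<in> S" using xy memX by blast
      thus "x $ i = real_of_int (\<alpha> i)" "\<alpha> i mod int m \<in> S" by (auto simp: \<alpha>_def)
    qed
    have yb: "y $ i = real_of_int (\<beta> i)" for i
    proof -
      obtain z where "y $ i = real_of_int z" using xy memX by blast
      thus "y $ i = real_of_int (\<beta> i)" by (auto simp: \<beta>_def)
    qed
    have abm: "\<alpha> i mod int m = \<beta> i mod int m" for i
      using fun_cong[OF xy(4), of i] by (simp add: cls_def \<alpha>_def \<beta>_def)
    define c where "c i = (\<beta> i - \<alpha> i) div int m" for i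
    have bc: "\<beta> i - \<alpha> i = int m * c i" for i
    proof -
      have "int m dvd \<beta> i - \<alpha> i" using abm[of i] by (metis mod_eq_dvd_iff)
      thus ?thesis by (simp add: c_def)
    qed
    obtain j where j: "1 \<le> j" "j \<le> int m - 1" "\<forall>i. (\<alpha> i + j * c i) mod int m \<in> S"
      using good_j[where \<alpha>=\<alpha> and c=c, OF m2 pp pm pmin S cS aS cond] by blast
    define t where "t = real_of_int j / real m"
    have t: "0 < t" "t < 1" using j m2 by (auto simp: t_def field_simps)
    have "(1 - t) *\<^sub>R x + t *\<^sub>R y \<in> X"
      unfolding memX
    proof
      fix i
      have "((1 - t) *\<^sub>R x + t *\<^sub>R y) $ i = x $ i + t * (y $ i - x $ i)" by (simp add: algebra_simps)
      also have "\<dots> = real_of_int (\<alpha> i) + t * real_of_int (\<beta> i - \<alpha> i)" by (simp add: xa yb)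
      also have "\<dots> = real_of_int (\<alpha> i + j * c i)" using m2 by (simp add: bc t_def)
      finally show "\<exists>z. ((1 - t) *\<^sub>R x + t *\<^sub>R y) $ i = real_of_int z \<and> z mod int m \<in> S"
        using j(3) by blast
    qed
    thus ?thesis using t by blast
  qed
  have "helly_prop X (k ^ CARD('n))" by (rule helly_from_pair[OF disc fincls clsN pair])
  hence "helly_number X \<le> enat (k ^ CARD('n))" unfolding helly_number_def by (intro Inf_lower) blast
  thus ?thesis by (simp add: X_def A_def)
qed

end
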